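(* Let $X$ be a separable Hilbert space, $N\ge1$, and $F\subset H^2(\mathbb{D},X)$ a family of functions. Then $F$ is cyclic for $S^*$ in $H^2(\mathbb{D},X)$ if and only if the family $\{\Psi_N(S^{*j}f): f\in F,\ 0\le j\le N-1\}$ is cyclic for $S^*$ in $H^2(\mathbb{D},X^N)$.
   Context: $\Psi_N:H^2(\mathbb{D},X)\to H^2(\mathbb{D},X^N)$ is defined by $\Psi_N(f)(z)=\sum_{k\ge0}\big(\hat f(Nk),\hat f(Nk+1),\dots,\hat f(Nk+N-1)\big)z^k$. $S^*$ is the backward shift; a family $G$ is cyclic if the closed span of $\{S^{*n}g:n\ge0,g\in G\}$ is the whole space. *)

theory Defs
  imports "HOL-Analysis.Analysis"
begin

text \<open>A complex Hilbert space: a real Hilbert space together with a compatible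
  multiplication by complex scalars (the real inner product is the real part of the
  complex one).\<close>
class complex_hilbert = real_inner + complete_space +
  fixes cscale :: "complex \<Rightarrow> 'a \<Rightarrow> 'a"
  assumes cscale_of_real: "cscale (complex_of_real r) x = scaleR r x"
    and cscale_add_left: "cscale (a + b) x = cscale a x + cscale b x"
    and cscale_add_right: "cscale a (x + y) = cscale a x + cscale a y"
    and cscale_mult: "cscale (a * b) x = cscale a (cscale b x)"
    and norm_cscale: "norm (cscale a x) = cmod a * norm x"

text \<open>H^2(D,X) is modelled through Taylor coefficients: f(z) = sum_n f n z^n
  with sum_n norm (f n)^2 finite.\<close>
definition H2 :: "(nat \<Rightarrow> 'a::real_normed_vector) set" where
  "H2 = {f. summable (\<lambda>n. (norm (f n))\<^sup>2)}"

definition H2_norm2 :: "(nat \<Rightarrow> 'a::real_normed_vector) \<Rightarrow> real" where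
  "H2_norm2 f = (\<Sum>n. (norm (f n))\<^sup>2)"

text \<open>H^2(D,X^N): coefficient k is the N-tuple (g k 0, ..., g k (N-1)); entries
  at indices i \<ge> N are required to vanish.\<close>
definition H2N :: "nat \<Rightarrow> (nat \<Rightarrow> nat \<Rightarrow> 'a::real_normed_vector) set" where
  "H2N N = {g. (\<forall>k i. N \<le> i \<longrightarrow> g k i = 0) \<and>
               summable (\<lambda>k. \<Sum>i<N. (norm (g k i))\<^sup>2)}"

definition H2N_norm2 :: "nat \<Rightarrow> (nat \<Rightarrow> nat \<Rightarrow> 'a::real_normed_vector) \<Rightarrow> real" where
  "H2N_norm2 N g = (\<Sum>k. \<Sum>i<N. (norm (g k i))\<^sup>2)"

text \<open>Backward shift S^*: (S^* f)(z) = (f(z) - f(0))/z, i.e. shift of coefficients.\<close>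
definition bshift :: "(nat \<Rightarrow> 'b) \<Rightarrow> nat \<Rightarrow> 'b" where
  "bshift f = (\<lambda>n. f (Suc n))"

definition cspan_H2 :: "(nat \<Rightarrow> 'a::complex_hilbert) set \<Rightarrow> (nat \<Rightarrow> 'a) set" where
  "cspan_H2 S = {v. \<exists>A c. finite A \<and> A \<subseteq> S \<and>
                     v = (\<lambda>n. \<Sum>a\<in>A. cscale (c a) (a n))}"

definition cspan_H2N :: "(nat \<Rightarrow> nat \<Rightarrow> 'a::complex_hilbert) set \<Rightarrow> (nat \<Rightarrow> nat \<Rightarrow> 'a) set" where
  "cspan_H2N S = {v. \<exists>A c. finite A \<and> A \<subseteq> S \<and>
                     v = (\<lambda>k i. \<Sum>a\<in>A. cscale (c a) (a k i))}"

text \<open>G is cyclic for S^*: the closed (complex) linear span of the S^*-orbits of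
  G is the whole space, i.e. that span is dense in the H^2 norm.\<close>
definition cyclic_H2 :: "(nat \<Rightarrow> 'a::complex_hilbert) set \<Rightarrow> bool" where
  "cyclic_H2 G \<longleftrightarrow>
     (\<forall>h\<in>H2. \<forall>e>0. \<exists>v\<in>cspan_H2 {(bshift ^^ n) g | n g. g \<in> G}.
        H2_norm2 (\<lambda>n. h n - v n) < e)"

definition cyclic_H2N :: "nat \<Rightarrow> (nat \<Rightarrow> nat \<Rightarrow> 'a::complex_hilbert) set \<Rightarrow> bool" where
  "cyclic_H2N N G \<longleftrightarrow>
     (\<forall>h\<in>H2N N. \<forall>e>0. \<exists>v\<in>cspan_H2N {(bshift ^^ n) g | n g. g \<in> G}.
        H2N_norm2 N (\<lambda>k i. h k i - v k i) < e)"

text \<open>Psi_N(f)(z) = sum_k (f^(Nk), ..., f^(Nk+N-1)) z^k.\<close>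
definition PsiN :: "nat \<Rightarrow> (nat \<Rightarrow> 'a::zero) \<Rightarrow> nat \<Rightarrow> nat \<Rightarrow> 'a" where
  "PsiN N f = (\<lambda>k i. if i < N then f (N * k + i) else 0)"

end

theory Submission
  imports Defs
begin

lemma cscale_zero_right: "cscale a (0::'a::complex_hilbert) = 0"
  using cscale_add_right[of a "0::'a" 0] by simp

lemma bshift_pow: "(bshift ^^ n) f = (\<lambda>m. f (m + n))"
  by (induction n arbitrary: f) (auto simp: bshift_def funpow_Suc_right)

lemma block_eq: "sum f {k*N..<k*N+(N::nat)} = (\<Sum>i<N. f (N*k+i))"
proof -
  have "sum f {k*N..<k*N+N} = sum (\<lambda>i. f (i + k*N)) {0..<N}"
    using sum.shift_bounds_nat_ivl[of f 0 "k*N" N] by (simp add: add.commute)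
  then show ?thesis by (simp add: atLeast0LessThan add.commute mult.commute)
qed

lemma norm_blocks:
  fixes u :: "nat \<Rightarrow> 'a::real_normed_vector"
  assumes "u \<in> H2" "N \<ge> 1" "\<And>k i. i < N \<Longrightarrow> g k i = u (N*k+i)"
  shows "(\<lambda>k. \<Sum>i<N. (norm (g k i))\<^sup>2) sums H2_norm2 u"
proof -
  have "(\<lambda>n. (norm (u n))\<^sup>2) sums H2_norm2 u"
    using assms(1) unfolding H2_def H2_norm2_def by (simp add: summable_sums)
  from sums_group[OF this, of N] assms(2)
  have "(\<lambda>k. sum (\<lambda>n. (norm (u n))\<^sup>2) {k*N..<k*N+N}) sums H2_norm2 u" by simp
  then show ?thesis using assms(3) by (simp add: block_eq)
qed

lemma H2_of_blocks:
  fixes u :: "nat \<Rightarrow> 'a::real_normed_vector"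
  assumes "summable (\<lambda>k. \<Sum>i<N. (norm (u (N*k+i)))\<^sup>2)" "N \<ge> 1"
  shows "u \<in> H2"
proof -
  let ?f = "\<lambda>n. (norm (u n))\<^sup>2"
  have "summable ?f"
  proof (rule summableI_nonneg_bounded)
    fix n
    have "(\<Sum>i<n. ?f i) \<le> (\<Sum>i<n*N. ?f i)"
      by (rule sum_mono2) (use assms(2) in auto)
    also have "\<dots> = (\<Sum>k<n. sum ?f {k*N..<k*N+N})"
      by (rule sum.nat_group[symmetric])
    also have "\<dots> = (\<Sum>k<n. \<Sum>i<N. ?f (N*k+i))" by (simp add: block_eq)
    also have "\<dots> \<le> (\<Sum>k. \<Sum>i<N. ?f (N*k+i))"
      by (rule sum_le_suminf[OF assms(1)]) (auto intro: sum_nonneg)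
    finally show "(\<Sum>i<n. ?f i) \<le> (\<Sum>k. \<Sum>i<N. ?f (N*k+i))" .
  qed simp
  then show ?thesis by (simp add: H2_def)
qed


lemma H2_add:
  fixes f g :: "nat \<Rightarrow> 'a::real_normed_vector"
  assumes "f \<in> H2" "g \<in> H2" shows "(\<lambda>n. f n + g n) \<in> H2"
proof -
  have s: "summable (\<lambda>n. 2*(norm (f n))\<^sup>2 + 2*(norm (g n))\<^sup>2)"
    using assms unfolding H2_def by (intro summable_add summable_mult) auto
  have le: "norm ((norm (f n + g n))\<^sup>2) \<le> 2*(norm (f n))\<^sup>2 + 2*(norm (g n))\<^sup>2" for n
  proof -
    have "norm (f n + g n) \<le> norm (f n) + norm (g n)" by (rule norm_triangle_ineq)
    then have "(norm (f n + g n))\<^sup>2 \<le> (norm (f n) + norm (g n))\<^sup>2"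
      by (simp add: power_mono)
    also have "\<dots> \<le> 2*(norm (f n))\<^sup>2 + 2*(norm (g n))\<^sup>2"
    proof -
      have "0 \<le> (norm (f n) - norm (g n))*(norm (f n) - norm (g n))" by simp
      then show ?thesis by (simp add: power2_eq_square algebra_simps)
    qed
    finally show ?thesis by simp
  qed
  show ?thesis unfolding H2_def mem_Collect_eq
    by (rule summable_comparison_test[OF _ s]) (use le in auto)
qed

lemma H2_cscale:
  fixes f :: "nat \<Rightarrow> 'a::complex_hilbert"
  assumes "f \<in> H2" shows "(\<lambda>n. cscale c (f n)) \<in> H2"
  using assms unfolding H2_def
  by (simp add: norm_cscale power_mult_distrib summable_mult)

lemma H2_zero: "(\<lambda>n. 0::'a::real_normed_vector) \<in> H2"
  by (simp add: H2_def)

lemma H2_sum: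
  fixes c :: "_ \<Rightarrow> complex"
  assumes "finite A" "A \<subseteq> (H2 :: (nat \<Rightarrow> 'a::complex_hilbert) set)"
  shows "(\<lambda>n. \<Sum>a\<in>A. cscale (c a) (a n)) \<in> H2"
  using assms
proof (induction A rule: finite_induct)
  case empty then show ?case using H2_zero by simp
next
  case (insert x F)
  then show ?case using H2_add[OF H2_cscale[of x "c x"] insert.IH] by simp
qed

lemma cspan_H2_sub: "S \<subseteq> H2 \<Longrightarrow> cspan_H2 S \<subseteq> H2"
  unfolding cspan_H2_def using H2_sum by blast

lemma H2_shift: "f \<in> H2 \<Longrightarrow> (bshift ^^ n) f \<in> H2"
  unfolding H2_def bshift_pow using summable_iff_shift[of "\<lambda>m. (norm (f m))\<^sup>2" n] by simp

lemma PsiN_inj: "N \<ge> 1 \<Longrightarrow> inj (PsiN N)"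
proof (rule injI)
  fix f g :: "nat \<Rightarrow> 'b::zero" assume N: "N \<ge> 1" and e: "PsiN N f = PsiN N g"
  show "f = g"
  proof
    fix m
    have "m = N * (m div N) + m mod N" by simp
    moreover have "m mod N < N" using N by simp
    ultimately show "f m = g m"
      using fun_cong[OF fun_cong[OF e, of "m div N"], of "m mod N"]
      by (simp add: PsiN_def)
  qed
qed

lemma PsiN_shift: "(bshift ^^ n) (PsiN N f) = PsiN N ((bshift ^^ (N*n)) f)"
  by (auto simp: bshift_pow PsiN_def algebra_simps intro!: ext)

lemma span_transfer:
  fixes B :: "(nat \<Rightarrow> 'a::complex_hilbert) set"
  assumes "N \<ge> 1"
  shows "(\<lambda>k i. \<Sum>a\<in>PsiN N ` B. cscale (c a) (a k i))
       = PsiN N (\<lambda>n. \<Sum>b\<in>B. cscale (c (PsiN N b)) (b n))"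
proof (intro ext)
  fix k i
  have inj: "inj_on (PsiN N) B" using inj_on_subset[OF PsiN_inj[OF assms] subset_UNIV] .
  show "(\<Sum>a\<in>PsiN N ` B. cscale (c a) (a k i))
       = PsiN N (\<lambda>n. \<Sum>b\<in>B. cscale (c (PsiN N b)) (b n)) k i"
  proof (cases "i < N")
    case True
    then show ?thesis by (subst sum.reindex[OF inj]) (simp add: PsiN_def)
  next
    case False
    then show ?thesis by (subst sum.reindex[OF inj]) (simp add: PsiN_def cscale_zero_right)
  qed
qed

lemma orbit_eq:
  assumes "N \<ge> 1"
  shows "{(bshift ^^ n) g |n g. g \<in> {PsiN N ((bshift ^^ j) f) |f j. f \<in> F \<and> j < N}}
       = PsiN N ` {(bshift ^^ n) g |n g. g \<in> F}"
proof (intro equalityI subsetI)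
  fix x assume "x \<in> {(bshift ^^ n) g |n g. g \<in> {PsiN N ((bshift ^^ j) f) |f j. f \<in> F \<and> j < N}}"
  then obtain n f j where x: "x = (bshift ^^ n) (PsiN N ((bshift ^^ j) f))" and f: "f \<in> F"
    by blast
  have "x = PsiN N ((bshift ^^ (N*n + j)) f)"
    unfolding x PsiN_shift by (simp add: funpow_add)
  then show "x \<in> PsiN N ` {(bshift ^^ n) g |n g. g \<in> F}" using f by blast
next
  fix x assume "x \<in> PsiN N ` {(bshift ^^ n) g |n g. g \<in> F}"
  then obtain m f where x: "x = PsiN N ((bshift ^^ m) f)" and f: "f \<in> F" by blast
  have m: "m = N * (m div N) + m mod N" by simp
  have lt: "m mod N < N" using assms by simp
  have "x = (bshift ^^ (m div N)) (PsiN N ((bshift ^^ (m mod N)) f))"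
    unfolding PsiN_shift x by (simp add: bshift_pow add.assoc mod_mult_div_eq)
  then show "x \<in> {(bshift ^^ n) g |n g. g \<in> {PsiN N ((bshift ^^ j) f) |f j. f \<in> F \<and> j < N}}"
    using f lt by blast
qed


lemma norm_transfer:
  fixes h v :: "nat \<Rightarrow> 'a::complex_hilbert"
  assumes "h \<in> H2" "v \<in> H2" "N \<ge> 1"
  shows "H2N_norm2 N (\<lambda>k i. PsiN N h k i - PsiN N v k i) = H2_norm2 (\<lambda>n. h n - v n)"
proof -
  have u: "(\<lambda>n. h n - v n) \<in> H2"
    using H2_add[OF assms(1) H2_cscale[OF assms(2), of "-1"]]
    by (simp add: cscale_of_real[of "-1", simplified])
  show ?thesis unfolding H2N_norm2_def
    by (rule sums_unique[symmetric], rule norm_blocks[OF u assms(3)]) (simp add: PsiN_def)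
qed

theorem mainTheorem15:
  fixes F :: "(nat \<Rightarrow> 'a::complex_hilbert) set" and N :: nat
  assumes separable: "\<exists>D::'a set. countable D \<and> closure D = UNIV"
    and N: "N \<ge> 1"
    and F: "F \<subseteq> H2"
  shows "cyclic_H2 F \<longleftrightarrow>
         cyclic_H2N N {PsiN N ((bshift ^^ j) f) | f j. f \<in> F \<and> j < N}"
proof -
  define Orb where "Orb = {(bshift ^^ n) g |n g. g \<in> F}"
  have OrbH: "Orb \<subseteq> H2" unfolding Orb_def using F H2_shift by blast
  have ON: "{(bshift ^^ n) g |n g. g \<in> {PsiN N ((bshift ^^ j) f) |f j. f \<in> F \<and> j < N}}
       = PsiN N ` Orb" unfolding Orb_def by (rule orbit_eq[OF N])
  have inj: "inj (PsiN N)" using PsiN_inj[OF N] .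
  show ?thesis unfolding cyclic_H2_def cyclic_H2N_def ON Orb_def[symmetric]
  proof
    assume cyc: "\<forall>h\<in>H2. \<forall>e>0. \<exists>v\<in>cspan_H2 Orb. H2_norm2 (\<lambda>n. h n - v n) < e"
    show "\<forall>h\<in>H2N N. \<forall>e>0. \<exists>v\<in>cspan_H2N (PsiN N ` Orb). H2N_norm2 N (\<lambda>k i. h k i - v k i) < e"
    proof (intro ballI allI impI)
      fix g :: "nat \<Rightarrow> nat \<Rightarrow> 'a" and e :: real
      assume g: "g \<in> H2N N" and e: "e > 0"
      define h where "h m = g (m div N) (m mod N)" for m
      have hb: "h (N*k+i) = g k i" if "i < N" for k i
        using that N by (simp add: h_def)
      have "summable (\<lambda>k. \<Sum>i<N. (norm (h (N*k+i)))\<^sup>2)"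
        using g hb unfolding H2N_def by simp
      then have hH: "h \<in> H2" using H2_of_blocks N by blast
      have gP: "g = PsiN N h"
        using g hb unfolding H2N_def PsiN_def by (auto intro!: ext)
      obtain v where v: "v \<in> cspan_H2 Orb" and lt: "H2_norm2 (\<lambda>n. h n - v n) < e"
        using cyc hH e by blast
      obtain A c where A: "finite A" "A \<subseteq> Orb" and vd: "v = (\<lambda>n. \<Sum>a\<in>A. cscale (c a) (a n))"
        using v unfolding cspan_H2_def by blast
      have vH: "v \<in> H2" using v cspan_H2_sub[OF OrbH] by blast
      have injA: "inj_on (PsiN N) A" using inj_on_subset[OF inj subset_UNIV] .
      define w where "w = (\<lambda>k i. \<Sum>a\<in>PsiN N ` A. cscale (c (the_inv_into A (PsiN N) a)) (a k i))"
      have wv: "w = PsiN N v"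
        unfolding w_def span_transfer[OF N] vd
        by (intro arg_cong[where f="PsiN N"] ext sum.cong) (simp_all add: the_inv_into_f_f[OF injA])
      have "w \<in> cspan_H2N (PsiN N ` Orb)"
        unfolding cspan_H2N_def w_def mem_Collect_eq
        by (rule exI[of _ "PsiN N ` A"], rule exI[of _ "\<lambda>a. c (the_inv_into A (PsiN N) a)"])
           (use A in auto)
      moreover have "H2N_norm2 N (\<lambda>k i. g k i - w k i) < e"
        using lt norm_transfer[OF hH vH N] gP wv by simp
      ultimately show "\<exists>v\<in>cspan_H2N (PsiN N ` Orb). H2N_norm2 N (\<lambda>k i. g k i - v k i) < e"
        by blast
    qed
  next
    assume cyc: "\<forall>h\<in>H2N N. \<forall>e>0. \<exists>v\<in>cspan_H2N (PsiN N ` Orb). H2N_norm2 N (\<lambda>k i. h k i - v k i) < e"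
    show "\<forall>h\<in>H2. \<forall>e>0. \<exists>v\<in>cspan_H2 Orb. H2_norm2 (\<lambda>n. h n - v n) < e"
    proof (intro ballI allI impI)
      fix h :: "nat \<Rightarrow> 'a" and e :: real
      assume hH: "h \<in> H2" and e: "e > 0"
      have "PsiN N h \<in> H2N N"
        unfolding H2N_def
        using norm_blocks[OF hH N, of "PsiN N h"] by (auto simp: PsiN_def sums_summable)
      then obtain w where w: "w \<in> cspan_H2N (PsiN N ` Orb)"
          and lt: "H2N_norm2 N (\<lambda>k i. PsiN N h k i - w k i) < e"
        using cyc e by blast
      obtain A c where A: "finite A" "A \<subseteq> PsiN N ` Orb"
          and wd: "w = (\<lambda>k i. \<Sum>a\<in>A. cscale (c a) (a k i))"
        using w unfolding cspan_H2N_def by blast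
      define B where "B = Orb \<inter> PsiN N -` A"
      have finB: "finite B" unfolding B_def
        using finite_vimageI[OF A(1) inj] by (rule finite_Int[OF disjI2])
      have AB: "A = PsiN N ` B" unfolding B_def using A(2) by blast
      define v where "v = (\<lambda>n. \<Sum>b\<in>B. cscale (c (PsiN N b)) (b n))"
      have BO: "B \<subseteq> Orb" unfolding B_def by blast
      have vS: "v \<in> cspan_H2 Orb" unfolding cspan_H2_def v_def mem_Collect_eq
        by (rule exI[of _ B], rule exI[of _ "\<lambda>b. c (PsiN N b)"]) (simp add: finB BO)
      have vH: "v \<in> H2" using vS cspan_H2_sub[OF OrbH] by blast
      have wv: "w = PsiN N v" unfolding wd AB v_def by (rule span_transfer[OF N])
      have "H2_norm2 (\<lambda>n. h n - v n) < e"
        using lt norm_transfer[OF hH vH N] wv by simp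
      then show "\<exists>v\<in>cspan_H2 Orb. H2_norm2 (\<lambda>n. h n - v n) < e" using vS by blast
    qed
  qed
qed

end
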